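(* Let $f:\mathcal{X}\times\mathcal{U}\to\mathcal{X}$ be Lipschitz with constant $L_f$ (i.e. $\|f(x,u)-f(x',u')\|_\infty\le L_f\|(x-x',u-u')\|_\infty$) with $f(0,u_0)=0$, and let $V:\mathcal{X}\to\mathbb{R}$ and $\pi:\mathcal{X}\to\mathcal{U}$, with $\pi$ Lipschitz with constant $L_\pi$. Let $\gamma>0$, $\epsilon>0$, and suppose $(V,\pi)$ is $\epsilon$-stable within $\mathcal{R}(\gamma)$, $\|\pi(0)-u_0\|_\infty\le\epsilon$, and $\gamma\ge L_f\max\{1,L_\pi+1\}\epsilon$. Let $B(\gamma)$ be any number with $B(\gamma)\ge\max\big(\sup_{x\in\mathcal{R}(\gamma)}\|f(x,\pi(x))\|_\infty,\ \gamma\big)$, let $V^*=\min\{V(x): x\in\mathcal{X},\ \gamma\le\|x\|_\infty\le B(\gamma)\}$ (assumed to be attained), and let $\rho=V^*-\mu$ for some $\mu>0$. Then $\mathcal{D}(\gamma,\rho)=\{x\in\mathcal{R}(\gamma): V(x)\le\rho\}$ is an $\mathcal{R}(\gamma)$-invariant sublevel set, i.e. $x\in\mathcal{D}(\gamma,\rho)$ implies $f(x,\pi(x))\in\mathcal{R}(\gamma)$.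
   Context: All norms are $\|\cdot\|_\infty$. $\mathcal{R}(\gamma)=\{x\in\mathcal{X}:\|x\|_\infty\le\gamma\}$. $\mathcal{B}(0,\epsilon)=\{x:\|x\|_\infty<\epsilon\}$. The pair $(V,\pi)$ is called $\epsilon$-stable within a region $\mathcal{R}$ if: (a) $V(0)=0$; (b) there exists $\zeta>0$ such that $V(f(x,\pi(x)))-V(x)<-\zeta$ for all $x\in\mathcal{R}\setminus\mathcal{B}(0,\epsilon)$; (c) $V(x)>0$ for all $x\in\mathcal{R}\setminus\mathcal{B}(0,\epsilon)$. *)

theory Defs
  imports "HOL-Analysis.Analysis"
begin

definition Rset :: "real \<Rightarrow> ('a::euclidean_space) set" where
  "Rset \<gamma> = {x. infnorm x \<le> \<gamma>}"

definition Bset0 :: "real \<Rightarrow> ('a::euclidean_space) set" where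
  "Bset0 \<epsilon> = {x. infnorm x < \<epsilon>}"

definition eps_stable ::
  "('x::euclidean_space \<Rightarrow> 'u \<Rightarrow> 'x) \<Rightarrow> ('x \<Rightarrow> real) \<Rightarrow> ('x \<Rightarrow> 'u) \<Rightarrow> real \<Rightarrow> 'x set \<Rightarrow> bool" where
  "eps_stable f V \<pi> \<epsilon> R \<longleftrightarrow>
     V 0 = 0 \<and>
     (\<exists>\<zeta>>0. \<forall>x \<in> R - Bset0 \<epsilon>. V (f x (\<pi> x)) - V x < - \<zeta>) \<and>
     (\<forall>x \<in> R - Bset0 \<epsilon>. V x > 0)"

definition Dset :: "('x::euclidean_space \<Rightarrow> real) \<Rightarrow> real \<Rightarrow> real \<Rightarrow> 'x set" where
  "Dset V \<gamma> \<rho> = {x \<in> Rset \<gamma>. V x \<le> \<rho>}"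

end

theory Submission
  imports Defs
begin

theorem theorem2:
  fixes f :: "real^'n \<Rightarrow> real^'m \<Rightarrow> real^'n"
    and V :: "real^'n \<Rightarrow> real"
    and \<pi> :: "real^'n \<Rightarrow> real^'m"
    and u0 :: "real^'m"
    and Lf L\<pi> \<gamma> \<epsilon> B Vstar \<mu> \<rho> :: real
  assumes f_lip: "\<And>x x' u u'. infnorm (f x u - f x' u') \<le> Lf * max (infnorm (x - x')) (infnorm (u - u'))"
    and f_eq: "f 0 u0 = 0"
    and pi_lip: "\<And>x x'. infnorm (\<pi> x - \<pi> x') \<le> L\<pi> * infnorm (x - x')"
    and gamma_pos: "\<gamma> > 0"
    and eps_pos: "\<epsilon> > 0"
    and stable: "eps_stable f V \<pi> \<epsilon> (Rset \<gamma>)"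
    and pi0: "infnorm (\<pi> 0 - u0) \<le> \<epsilon>"
    and gamma_ge: "\<gamma> \<ge> Lf * max 1 (L\<pi> + 1) * \<epsilon>"
    and B_ge_sup: "\<And>x. x \<in> Rset \<gamma> \<Longrightarrow> infnorm (f x (\<pi> x)) \<le> B"
    and B_ge_gamma: "\<gamma> \<le> B"
    and Vstar_attained: "\<exists>x. \<gamma> \<le> infnorm x \<and> infnorm x \<le> B \<and> V x = Vstar"
    and Vstar_min: "\<And>x. \<gamma> \<le> infnorm x \<Longrightarrow> infnorm x \<le> B \<Longrightarrow> Vstar \<le> V x"
    and mu_pos: "\<mu> > 0"
    and rho_def: "\<rho> = Vstar - \<mu>"
  shows "\<forall>x \<in> Dset V \<gamma> \<rho>. f x (\<pi> x) \<in> Rset \<gamma>"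
proof
  fix x assume xD: "x \<in> Dset V \<gamma> \<rho>"
  hence xR: "infnorm x \<le> \<gamma>" and Vx: "V x \<le> \<rho>" by (auto simp: Dset_def Rset_def)
  define y where "y = f x (\<pi> x)"
  have yB: "infnorm y \<le> B" using B_ge_sup xR by (auto simp: Rset_def y_def)
  show "f x (\<pi> x) \<in> Rset \<gamma>"
  proof (rule ccontr)
    assume "f x (\<pi> x) \<notin> Rset \<gamma>"
    hence yg: "infnorm y > \<gamma>" by (auto simp: Rset_def y_def)
    have Vy: "Vstar \<le> V y" using Vstar_min yg yB by auto
    show False
    proof (cases "infnorm x < \<epsilon>")
      case False
      obtain \<zeta> where z: "\<zeta> > 0" "\<forall>x \<in> Rset \<gamma> - Bset0 \<epsilon>. V (f x (\<pi> x)) - V x < - \<zeta>"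
        using stable unfolding eps_stable_def by blast
      have "x \<in> Rset \<gamma> - Bset0 \<epsilon>" using False xR by (auto simp: Rset_def Bset0_def)
      hence "V y - V x < - \<zeta>" using z by (auto simp: y_def)
      thus False using Vy Vx rho_def mu_pos z(1) by linarith
    next
      case True
      obtain e :: "real^'n" where e: "e \<noteq> 0" using zero_neq_one by blast
      have ep: "infnorm e > 0" using e infnorm_pos_lt by blast
      have "infnorm (\<pi> e - \<pi> 0) \<le> L\<pi> * infnorm e" using pi_lip[of e 0] by simp
      hence Lp: "L\<pi> \<ge> 0" using ep infnorm_pos_le[of "\<pi> e - \<pi> 0"]
        by (metis mult_neg_pos not_le order_le_less_trans)
      have "infnorm (f e u0 - f 0 u0) \<le> Lf * max (infnorm e) (infnorm (u0 - u0))" using f_lip[of e u0 0 u0] by simp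
      hence "0 \<le> Lf * infnorm e" using ep infnorm_pos_le[of "f e u0 - f 0 u0"] by (simp add: max_def infnorm_0)
      hence Lf: "Lf \<ge> 0" using ep by (simp add: zero_le_mult_iff)
      have "infnorm (\<pi> x - u0) \<le> infnorm (\<pi> x - \<pi> 0) + infnorm (\<pi> 0 - u0)"
        using infnorm_triangle[of "\<pi> x - \<pi> 0" "\<pi> 0 - u0"] by simp
      also have "\<dots> \<le> L\<pi> * infnorm x + \<epsilon>" using pi_lip[of x 0] pi0 by simp
      also have "\<dots> \<le> L\<pi> * \<epsilon> + \<epsilon>" using True Lp by (simp add: mult_left_mono)
      finally have pu: "infnorm (\<pi> x - u0) \<le> (L\<pi> + 1) * \<epsilon>" by (simp add: algebra_simps)
      have m: "max (infnorm (x - 0)) (infnorm (\<pi> x - u0)) \<le> max 1 (L\<pi> + 1) * \<epsilon>"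
      proof -
        have "\<epsilon> \<le> (L\<pi> + 1) * \<epsilon>" using Lp eps_pos by (simp add: algebra_simps)
        hence "\<epsilon> \<le> max 1 (L\<pi> + 1) * \<epsilon>" and "(L\<pi> + 1) * \<epsilon> \<le> max 1 (L\<pi> + 1) * \<epsilon>"
          using eps_pos by (auto simp: max_def)
        thus ?thesis using True pu by simp
      qed
      have "infnorm y = infnorm (f x (\<pi> x) - f 0 u0)" by (simp add: y_def f_eq)
      also have "\<dots> \<le> Lf * max (infnorm (x - 0)) (infnorm (\<pi> x - u0))" by (rule f_lip)
      also have "\<dots> \<le> Lf * (max 1 (L\<pi> + 1) * \<epsilon>)" using m Lf by (rule mult_left_mono)
      finally show False using gamma_ge yg by (simp add: mult.assoc)
    qed
  qed
qed

end
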